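(* A symbolic matrix product $P$ is positive semi-definite if and only if $P$ is symmetric.
   Context: Let $X_1,\dots,X_\ell$ be formal variables. A symbolic matrix product of degree $k$ with $\ell$ variables is a formal word $P=\prod_{i=1}^{k}X_{\iota(i)}^{\tau(i)}$ with $\iota:[k]\to[\ell]$ and $\tau:[k]\to\{1,T\}$. Formal transposition acts on words by $(X_i^{1})^T=X_i^T$, $(X_i^T)^T=X_i$ and $(W_1W_2)^T=W_2^TW_1^T$; equality of products means equality as formal words. For $n\in\mathbb N$ and $A_1,\dots,A_\ell\in\mathbb R^{n\times n}$, $P(A_1,\dots,A_\ell)$ denotes the matrix obtained by substituting $A_i$ for $X_i$ (and $A_i^T$ for $X_i^T$) and multiplying. $P$ is called positive semi-definite if for every $n\in\mathbb N$ and all $A_1,\dots,A_\ell\in\mathbb R^{n\times n}$, all (complex) eigenvalues of $P(A_1,\dots,A_\ell)$ are real and non-negative. $P$ is called symmetric if $k$ is even and there exists $j\in[k]$ such that, with indices modulo $k$, the cyclically shifted word $\prod_{i=j+1}^{j+k}X_{\iota(i)}^{\tau(i)}$ equals $LL^T$ as a formal word, where $L=\prod_{i=j+1}^{j+k/2}X_{\iota(i)}^{\tau(i)}$. *)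

theory Defs
  imports "Jordan_Normal_Form.Matrix" "Jordan_Normal_Form.Char_Poly"
begin

text \<open>A letter (i, t) stands for X_i if t = False and for X_i^T if t = True.
  A symbolic matrix product of degree k is a list of k letters.\<close>
type_synonym letter = "nat \<times> bool"
type_synonym word = "letter list"

definition letter_transp :: "letter \<Rightarrow> letter" where
  "letter_transp l = (fst l, \<not> snd l)"

definition word_transp :: "word \<Rightarrow> word" where
  "word_transp w = rev (map letter_transp w)"

definition eval_letter :: "(nat \<Rightarrow> real mat) \<Rightarrow> letter \<Rightarrow> real mat" where
  "eval_letter A l = (if snd l then transpose_mat (A (fst l)) else A (fst l))"

definition eval_word :: "nat \<Rightarrow> (nat \<Rightarrow> real mat) \<Rightarrow> word \<Rightarrow> real mat" where
  "eval_word n A w = foldr (\<lambda>l M. eval_letter A l * M) w (1\<^sub>m n)"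

definition psd_word :: "word \<Rightarrow> bool" where
  "psd_word w = (\<forall>n A. (\<forall>i. A i \<in> carrier_mat n n) \<longrightarrow>
     (\<forall>c. eigenvalue (map_mat complex_of_real (eval_word n A w)) c \<longrightarrow>
        c \<in> \<real> \<and> 0 \<le> Re c))"

text \<open>Symmetric: k even and some cyclic shift equals L L^T with L its first half.
  Shift by j in [k] (1-based) corresponds to rotate j, and j = k is the same as j = 0.\<close>
definition symmetric_word :: "word \<Rightarrow> bool" where
  "symmetric_word w = (even (length w) \<and>
     (\<exists>j < length w. rotate j w = take (length w div 2) (rotate j w) @
                                  word_transp (take (length w div 2) (rotate j w))))"

end

theory Submission
  imports Defs "Jordan_Normal_Form.Schur_Decomposition"
begin

lemma eval_letter_carrier:
  assumes "\<And>i. A i \<in> carrier_mat n n"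
  shows "eval_letter A l \<in> carrier_mat n n"
  using assms[of "fst l"] by (simp add: eval_letter_def)

lemma eval_word_Cons: "eval_word n A (l # w) = eval_letter A l * eval_word n A w"
  by (simp add: eval_word_def)

lemma eval_word_Nil: "eval_word n A [] = 1\<^sub>m n"
  by (simp add: eval_word_def)

lemma eval_word_carrier:
  assumes "\<And>i. A i \<in> carrier_mat n n"
  shows "eval_word n A w \<in> carrier_mat n n"
proof (induction w)
  case Nil
  then show ?case by (simp add: eval_word_def)
next
  case (Cons l w)
  show ?case unfolding eval_word_Cons
    using mult_carrier_mat[OF eval_letter_carrier[of A n l, OF assms] Cons] .
qed

lemma eval_word_append:
  assumes A: "\<And>i. A i \<in> carrier_mat n n"
  shows "eval_word n A (u @ v) = eval_word n A u * eval_word n A v"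
proof (induction u)
  case Nil
  show ?case unfolding eval_word_Nil append.simps
    using left_mult_one_mat[OF eval_word_carrier[of A n v, OF A]] by simp
next
  case (Cons l u)
  have "eval_word n A ((l # u) @ v) = eval_letter A l * (eval_word n A u * eval_word n A v)"
    using Cons by (simp add: eval_word_Cons)
  also have "\<dots> = eval_letter A l * eval_word n A u * eval_word n A v"
    using assoc_mult_mat[OF eval_letter_carrier[of A n l, OF A]
       eval_word_carrier[of A n u, OF A] eval_word_carrier[of A n v, OF A]] by simp
  finally show ?case unfolding eval_word_Cons .
qed

lemma eval_word_single:
  assumes A: "\<And>i. A i \<in> carrier_mat n n"
  shows "eval_word n A [l] = eval_letter A l"
  unfolding eval_word_Cons eval_word_Nil
  using right_mult_one_mat[OF eval_letter_carrier[of A n l, OF A]] .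

lemma eval_letter_transp:
  "eval_letter A (letter_transp l) = transpose_mat (eval_letter A l)"
  by (simp add: eval_letter_def letter_transp_def)

lemma eval_word_transp:
  assumes A: "\<And>i. A i \<in> carrier_mat n n"
  shows "eval_word n A (word_transp u) = transpose_mat (eval_word n A u)"
proof (induction u)
  case Nil
  then show ?case by (simp add: eval_word_def word_transp_def)
next
  case (Cons l u)
  have wt: "word_transp (l # u) = word_transp u @ [letter_transp l]"
    by (simp add: word_transp_def)
  have el: "eval_word n A [letter_transp l] = transpose_mat (eval_letter A l)"
    unfolding eval_word_single[of A n, OF A] eval_letter_transp ..
  show ?case
    unfolding wt eval_word_append[of A n, OF A] Cons el
    using transpose_mult[OF eval_letter_carrier[of A n l, OF A] eval_word_carrier[of A n u, OF A]]
    by (simp add: eval_word_Cons)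
qed


lemma eigenvalue_swap:
  fixes X Y :: "complex mat"
  assumes X: "X \<in> carrier_mat n n" and Y: "Y \<in> carrier_mat n n"
    and ev: "eigenvalue (X * Y) c" and c: "c \<noteq> 0"
  shows "eigenvalue (Y * X) c"
proof -
  from ev obtain v where v: "v \<in> carrier_vec n" "v \<noteq> 0\<^sub>v n" and e: "(X * Y) *\<^sub>v v = c \<cdot>\<^sub>v v"
    unfolding eigenvalue_def eigenvector_def using X Y by auto
  define u where "u = Y *\<^sub>v v"
  have u: "u \<in> carrier_vec n" using Y v unfolding u_def by auto
  have Xu: "X *\<^sub>v u = c \<cdot>\<^sub>v v" using e X Y v unfolding u_def by auto
  have "u \<noteq> 0\<^sub>v n"
  proof
    assume "u = 0\<^sub>v n"
    moreover have "X *\<^sub>v 0\<^sub>v n = 0\<^sub>v n" using X by (intro eq_vecI) auto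
    ultimately have cv: "c \<cdot>\<^sub>v v = 0\<^sub>v n" using Xu by auto
    have "v = 0\<^sub>v n"
    proof (intro eq_vecI)
      fix i assume i: "i < dim_vec (0\<^sub>v n :: complex vec)"
      have "(c \<cdot>\<^sub>v v) $ i = 0" using cv i by simp
      then show "v $ i = 0\<^sub>v n $ i" using c i v by simp
    qed (use v in auto)
    then show False using v by auto
  qed
  moreover have "(Y * X) *\<^sub>v u = c \<cdot>\<^sub>v u"
  proof -
    have "(Y * X) *\<^sub>v u = Y *\<^sub>v (X *\<^sub>v u)" using X Y u by auto
    also have "\<dots> = Y *\<^sub>v (c \<cdot>\<^sub>v v)" using Xu by simp
    also have "\<dots> = c \<cdot>\<^sub>v u" unfolding u_def using mult_mat_vec[OF Y v(1)] .
    finally show ?thesis .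
  qed
  ultimately show ?thesis unfolding eigenvalue_def eigenvector_def using u X Y by auto
qed


lemma map_transpose_mat: "map_mat f (transpose_mat A) = transpose_mat (map_mat f A)"
  by (intro eq_matI) auto

lemma eigenvalue_gram:
  fixes E :: "real mat"
  assumes E: "E \<in> carrier_mat n n"
    and ev: "eigenvalue (map_mat complex_of_real (E * transpose_mat E)) c"
  shows "c \<in> \<real> \<and> 0 \<le> Re c"
proof -
  define M where "M = map_mat complex_of_real E"
  have M: "M \<in> carrier_mat n n" "transpose_mat M \<in> carrier_mat n n" using E unfolding M_def by auto
  have MM: "map_mat complex_of_real (E * transpose_mat E) = M * transpose_mat M"
    unfolding M_def map_transpose_mat[symmetric]
    using of_real_hom.mat_hom_mult[OF E transpose_carrier_mat[THEN iffD2, OF E]] by simp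
  from ev obtain v where v: "v \<in> carrier_vec n" "v \<noteq> 0\<^sub>v n" and e: "(M * transpose_mat M) *\<^sub>v v = c \<cdot>\<^sub>v v"
    unfolding eigenvalue_def eigenvector_def MM using M by auto
  define u where "u = transpose_mat M *\<^sub>v v"
  have u: "u \<in> carrier_vec n" using M v unfolding u_def by auto
  have cv: "conjugate v \<in> carrier_vec n" using v by simp
  have Mu: "(M * transpose_mat M) *\<^sub>v v = M *\<^sub>v u" unfolding u_def using M v by auto
  have tc: "transpose_mat M *\<^sub>v conjugate v = conjugate u"
  proof (intro eq_vecI)
    fix j assume j: "j < dim_vec (conjugate u)"
    then have jn: "j < n" using u by simp
    have "(transpose_mat M *\<^sub>v conjugate v) $ j = (\<Sum>i = 0..<n. M $$ (i, j) * cnj (v $ i))"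
      using jn M v by (simp add: scalar_prod_def)
    moreover have "conjugate u $ j = cnj (\<Sum>i = 0..<n. M $$ (i, j) * v $ i)"
      using jn M v unfolding u_def by (simp add: scalar_prod_def)
    moreover have "\<And>i. i < n \<Longrightarrow> cnj (M $$ (i, j)) = M $$ (i, j)"
      using jn E unfolding M_def by simp
    ultimately show "(transpose_mat M *\<^sub>v conjugate v) $ j = conjugate u $ j"
      by (simp add: cnj_sum)
  qed (use u M in auto)
  have key: "conjugate v \<bullet> (M *\<^sub>v u) = conjugate u \<bullet> u"
  proof -
    have "vec n (\<lambda>j. conjugate v \<bullet> col M j) \<bullet> u = conjugate v \<bullet> vec n (\<lambda>i. row M i \<bullet> u)"
      using assoc_scalar_prod[OF cv M(1) u] .
    moreover have "vec n (\<lambda>i. row M i \<bullet> u) = M *\<^sub>v u" using M unfolding mult_mat_vec_def by simp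
    moreover have "vec n (\<lambda>j. conjugate v \<bullet> col M j) = transpose_mat M *\<^sub>v conjugate v"
      using M cv unfolding mult_mat_vec_def
      by (intro eq_vecI) (auto intro: comm_scalar_prod[of _ n])
    ultimately show ?thesis using tc by simp
  qed
  have lhs: "conjugate v \<bullet> ((M * transpose_mat M) *\<^sub>v v) = c * (v \<bullet>c v)"
    unfolding e using v by (simp add: conjugate_vec_sprod_comm[OF v(1) v(1)])
  have rhs: "conjugate u \<bullet> u = u \<bullet>c u" using conjugate_vec_sprod_comm[OF u u] by simp
  have eq: "c * (v \<bullet>c v) = u \<bullet>c u" using lhs rhs key Mu by simp
  have p: "v \<bullet>c v > 0" using v by simp
  have q: "u \<bullet>c u \<ge> 0" by auto
  from p have pI: "Im (v \<bullet>c v) = 0" "Re (v \<bullet>c v) > 0" by (auto simp: less_complex_def)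
  from q have qI: "Im (u \<bullet>c u) = 0" "Re (u \<bullet>c u) \<ge> 0" by (auto simp: less_eq_complex_def)
  have "Im c * Re (v \<bullet>c v) = 0" using arg_cong[OF eq, of Im] pI qI by simp
  then have ic: "Im c = 0" using pI by simp
  have "Re c * Re (v \<bullet>c v) \<ge> 0" using arg_cong[OF eq, of Re] pI qI ic by simp
  then have "Re c \<ge> 0" using pI by (simp add: zero_le_mult_iff)
  then show ?thesis using ic by (simp add: complex_is_Real_iff)
qed


lemma symmetric_imp_psd:
  assumes sym: "symmetric_word P"
  shows "psd_word P"
  unfolding psd_word_def
proof (intro allI impI)
  fix n :: nat and A :: "nat \<Rightarrow> real mat" and c :: complex
  assume Aall: "\<forall>i. A i \<in> carrier_mat n n"
  assume ev: "eigenvalue (map_mat complex_of_real (eval_word n A P)) c"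
  have A: "\<And>i. A i \<in> carrier_mat n n" using Aall by blast
  show "c \<in> \<real> \<and> 0 \<le> Re c"
  proof (cases "c = 0")
    case True
    then show ?thesis by simp
  next
    case False
    from sym obtain j where j: "j < length P"
      and rot: "rotate j P = take (length P div 2) (rotate j P) @
                  word_transp (take (length P div 2) (rotate j P))"
      unfolding symmetric_word_def by blast
    define L where "L = take (length P div 2) (rotate j P)"
    define X where "X = eval_word n A (take j P)"
    define Y where "Y = eval_word n A (drop j P)"
    have X: "X \<in> carrier_mat n n" unfolding X_def using eval_word_carrier[of A n, OF A] .
    have Y: "Y \<in> carrier_mat n n" unfolding Y_def using eval_word_carrier[of A n, OF A] .
    have EL: "eval_word n A L \<in> carrier_mat n n" using eval_word_carrier[of A n, OF A] .
    have P: "eval_word n A P = X * Y"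
      unfolding X_def Y_def eval_word_append[of A n, OF A, symmetric] by simp
    have "rotate j P = drop j P @ take j P"
      using rotate_drop_take[of j P] j by simp
    then have "eval_word n A (rotate j P) = Y * X"
      unfolding X_def Y_def eval_word_append[of A n, OF A, symmetric] by simp
    moreover have "eval_word n A (rotate j P) = eval_word n A L * transpose_mat (eval_word n A L)"
      using rot unfolding L_def[symmetric]
      by (metis eval_word_append[of A n, OF A] eval_word_transp[of A n, OF A])
    ultimately have YX: "Y * X = eval_word n A L * transpose_mat (eval_word n A L)" by simp
    have "eigenvalue (map_mat complex_of_real X * map_mat complex_of_real Y) c"
      using ev unfolding P of_real_hom.mat_hom_mult[OF X Y] .
    then have "eigenvalue (map_mat complex_of_real Y * map_mat complex_of_real X) c"
      using eigenvalue_swap[of _ n] X Y False by auto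
    then have "eigenvalue (map_mat complex_of_real (eval_word n A L * transpose_mat (eval_word n A L))) c"
      unfolding YX[symmetric] of_real_hom.mat_hom_mult[OF Y X] .
    then show ?thesis using eigenvalue_gram[OF EL] by blast
  qed
qed


lemma letter_transp_neq: "letter_transp l \<noteq> l"
  by (cases l) (simp add: letter_transp_def)

lemma letter_transp_transp[simp]: "letter_transp (letter_transp l) = l"
  by (cases l) (simp add: letter_transp_def)

lemma reflect_imp_symmetric:
  fixes w :: word
  defines "k \<equiv> length w"
  assumes k: "k > 0" and a: "a < k"
    and refl: "\<And>j. j < k \<Longrightarrow> w ! j = letter_transp (w ! nat ((int a - 1 - int j) mod int k))"
  shows "symmetric_word w"
proof -
  define \<rho> where "\<rho> j = nat ((int a - 1 - int j) mod int k)" for j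
  have \<rho>k: "\<rho> j < k" for j unfolding \<rho>_def using k by (simp add: nat_less_iff)
  have \<rho>i: "int (\<rho> j) = (int a - 1 - int j) mod int k" for j unfolding \<rho>_def using k by simp
  have R: "\<And>j. j < k \<Longrightarrow> w ! j = letter_transp (w ! \<rho> j)" using refl unfolding \<rho>_def by blast
  have nofix: "\<rho> j \<noteq> j" if "j < k" for j
  proof
    assume "\<rho> j = j"
    then have "w ! j = letter_transp (w ! j)" using R[OF that] by simp
    then show False using letter_transp_neq by metis
  qed
  have ev: "even k"
  proof (rule ccontr)
    assume odd: "odd k"
    define j where "j = nat (((int a - 1) * ((int k + 1) div 2)) mod int k)"
    have jk: "j < k" unfolding j_def using k by (simp add: nat_less_iff)
    have ji: "int j = ((int a - 1) * ((int k + 1) div 2)) mod int k" unfolding j_def using k by simp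
    have two: "2 * ((int k + 1) div 2) = int k + 1" using odd by presburger
    define x where "x = (int a - 1) * ((int k + 1) div 2)"
    have x2: "2 * x = (int a - 1) * (int k + 1)" unfolding x_def using two
      by (metis mult.left_commute)
    have jx: "int j = x - int k * (x div int k)" unfolding ji x_def
      by (simp add: minus_div_mult_eq_mod [symmetric] algebra_simps)
    have "int a - 1 - int j - int j = int k * (2 * (x div int k) - (int a - 1))"
      using jx x2 by (simp add: algebra_simps)
    then have "int k dvd (int a - 1 - int j) - int j" by simp
    then have "(int a - 1 - int j) mod int k = int j mod int k"
      by (simp add: mod_eq_dvd_iff)
    also have "\<dots> = int j" using jk by simp
    finally have "int (\<rho> j) = int j" using \<rho>i by simp
    then show False using nofix[OF jk] by simp
  qed
  have aev: "even a"
  proof (rule ccontr)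
    assume odd: "odd a"
    define j where "j = (a - 1) div 2"
    have jk: "j < k" unfolding j_def using a by simp
    have "int a - 1 - int j = int j" unfolding j_def using odd by presburger
    then have "int (\<rho> j) = int j" using \<rho>i jk by simp
    then show False using nofix[OF jk] by simp
  qed
  define h where "h = a div 2"
  have hk: "h < length w" using a unfolding h_def k_def by simp
  define u where "u = rotate h w"
  have lu: "length u = k" unfolding u_def k_def by simp
  have un: "u ! s = w ! ((h + s) mod k)" if "s < k" for s
    unfolding u_def k_def using that k_def by (simp add: nth_rotate)
  have U: "u ! s = letter_transp (u ! (k - 1 - s))" if s: "s < k" for s
  proof -
    have j: "(h + s) mod k < k" using k by simp
    have "int (\<rho> ((h + s) mod k)) = int ((h + (k - 1 - s)) mod k)"
    proof -
      have "int (\<rho> ((h + s) mod k)) = (int a - 1 - int ((h + s) mod k)) mod int k" using \<rho>i by simp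
      also have "\<dots> = (int a - 1 - (int h + int s)) mod int k"
        by (simp add: zmod_int mod_diff_right_eq)
      also have "\<dots> = (int h + (int k - 1 - int s)) mod int k"
      proof -
        have "int a = 2 * int h" unfolding h_def using aev by presburger
        then have "int a - 1 - (int h + int s) = (int h + (int k - 1 - int s)) - int k" by simp
        then show ?thesis by (simp only: mod_eq_dvd_iff) simp
      qed
      also have "\<dots> = int ((h + (k - 1 - s)) mod k)" using s by (simp add: zmod_int of_nat_diff algebra_simps)
      finally show ?thesis .
    qed
    then have "\<rho> ((h + s) mod k) = (h + (k - 1 - s)) mod k" by simp
    then show ?thesis using R[OF j] un[OF s] un[of "k - 1 - s"] s by simp
  qed
  define T where "T = take (k div 2) u"
  have "u = T @ word_transp T"
  proof (rule nth_equalityI)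
    show "length u = length (T @ word_transp T)" unfolding T_def word_transp_def using lu ev by (simp, presburger)
  next
    fix s assume s: "s < length u"
    show "u ! s = (T @ word_transp T) ! s"
    proof (cases "s < k div 2")
      case True
      then show ?thesis unfolding T_def using lu by (simp add: nth_append)
    next
      case False
      have lT: "length T = k div 2" unfolding T_def using lu by simp
      have i: "s - k div 2 < k div 2" using s lu False ev by auto
      have "(T @ word_transp T) ! s = word_transp T ! (s - k div 2)"
        using False lT by (simp add: nth_append)
      also have "\<dots> = letter_transp (T ! (k div 2 - 1 - (s - k div 2)))"
        unfolding word_transp_def using i lT by (simp add: rev_nth)
      also have "k div 2 - 1 - (s - k div 2) = k - 1 - s" using False s lu ev by auto
      also have "T ! (k - 1 - s) = u ! (k - 1 - s)" unfolding T_def using False s lu ev by auto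
      finally show ?thesis using U[of s] s lu by simp
    qed
  qed
  then have "rotate h w = take (length w div 2) (rotate h w) @ word_transp (take (length w div 2) (rotate h w))"
    unfolding u_def T_def k_def .
  then show ?thesis unfolding symmetric_word_def using hk ev k_def by blast
qed


definition Rmat :: "complex mat \<Rightarrow> real mat" where
  "Rmat M = four_block_mat (map_mat Re M) (- map_mat Im M) (map_mat Im M) (map_mat Re M)"

lemma Rmat_carrier: "M \<in> carrier_mat n m \<Longrightarrow> Rmat M \<in> carrier_mat (n + n) (m + m)"
  unfolding Rmat_def by auto

lemma row_map_mat':
  assumes "i < dim_row A" shows "row (map_mat f A) i = map_vec f (row A i)"
  using assms by (intro eq_vecI) auto

lemma Re_sprod:
  fixes v w :: "complex vec"
  assumes d: "dim_vec v = dim_vec w"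
  shows "Re (v \<bullet> w) = map_vec Re v \<bullet> map_vec Re w - map_vec Im v \<bullet> map_vec Im w"
proof -
  have "Re (v \<bullet> w) = (\<Sum>l = 0..<dim_vec w. Re (v$l) * Re (w$l) - Im (v$l) * Im (w$l))"
    by (simp add: scalar_prod_def Re_sum)
  also have "\<dots> = (\<Sum>l = 0..<dim_vec w. Re (v$l) * Re (w$l)) - (\<Sum>l = 0..<dim_vec w. Im (v$l) * Im (w$l))"
    by (rule sum_subtractf)
  also have "(\<Sum>l = 0..<dim_vec w. Re (v$l) * Re (w$l)) = map_vec Re v \<bullet> map_vec Re w"
    unfolding scalar_prod_def using d by (intro sum.cong) auto
  also have "(\<Sum>l = 0..<dim_vec w. Im (v$l) * Im (w$l)) = map_vec Im v \<bullet> map_vec Im w"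
    unfolding scalar_prod_def using d by (intro sum.cong) auto
  finally show ?thesis .
qed

lemma Im_sprod:
  fixes v w :: "complex vec"
  assumes d: "dim_vec v = dim_vec w"
  shows "Im (v \<bullet> w) = map_vec Re v \<bullet> map_vec Im w + map_vec Im v \<bullet> map_vec Re w"
proof -
  have "Im (v \<bullet> w) = (\<Sum>l = 0..<dim_vec w. Re (v$l) * Im (w$l) + Im (v$l) * Re (w$l))"
    by (simp add: scalar_prod_def Im_sum)
  also have "\<dots> = (\<Sum>l = 0..<dim_vec w. Re (v$l) * Im (w$l)) + (\<Sum>l = 0..<dim_vec w. Im (v$l) * Re (w$l))"
    by (rule sum.distrib)
  also have "(\<Sum>l = 0..<dim_vec w. Re (v$l) * Im (w$l)) = map_vec Re v \<bullet> map_vec Im w"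
    unfolding scalar_prod_def using d by (intro sum.cong) auto
  also have "(\<Sum>l = 0..<dim_vec w. Im (v$l) * Re (w$l)) = map_vec Im v \<bullet> map_vec Re w"
    unfolding scalar_prod_def using d by (intro sum.cong) auto
  finally show ?thesis .
qed

lemma Im_sum_mult: "Im (\<Sum>l\<in>S. a l * b l) = (\<Sum>l\<in>S. Re (a l) * Im (b l)) + (\<Sum>l\<in>S. Im (a l) * Re (b l))"
  by (simp add: Im_sum sum.distrib)

lemma Re_sum_mult: "Re (\<Sum>l\<in>S. a l * b l) = (\<Sum>l\<in>S. Re (a l) * Re (b l)) + (\<Sum>l\<in>S. - Im (a l) * Im (b l))"
  by (simp add: Re_sum sum_subtractf sum_negf)

lemma Re_mult_mat:
  assumes M: "M \<in> carrier_mat n m" and N: "N \<in> carrier_mat m p"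
  shows "map_mat Re (M * N) = map_mat Re M * map_mat Re N + (- map_mat Im M) * map_mat Im N"
proof (rule eq_matI)
  fix i j assume i: "i < dim_row (map_mat Re M * map_mat Re N + (- map_mat Im M) * map_mat Im N)"
    and j: "j < dim_col (map_mat Re M * map_mat Re N + (- map_mat Im M) * map_mat Im N)"
  have i': "i < n" and j': "j < p" using i j M N by auto
  show "map_mat Re (M * N) $$ (i, j) = (map_mat Re M * map_mat Re N + (- map_mat Im M) * map_mat Im N) $$ (i, j)"
    using i' j' M N by (simp add: row_map_mat' Re_sprod)
qed (use M N in auto)

lemma Re_mult_mat2:
  assumes M: "M \<in> carrier_mat n m" and N: "N \<in> carrier_mat m p"
  shows "map_mat Re (M * N) = map_mat Im M * (- map_mat Im N) + map_mat Re M * map_mat Re N"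
proof (rule eq_matI)
  fix i j assume i: "i < dim_row (map_mat Im M * (- map_mat Im N) + map_mat Re M * map_mat Re N)"
    and j: "j < dim_col (map_mat Im M * (- map_mat Im N) + map_mat Re M * map_mat Re N)"
  have i': "i < n" and j': "j < p" using i j M N by auto
  show "map_mat Re (M * N) $$ (i, j) = (map_mat Im M * (- map_mat Im N) + map_mat Re M * map_mat Re N) $$ (i, j)"
    using i' j' M N by (simp add: row_map_mat' Re_sprod)
qed (use M N in auto)

lemma Im_mult_mat:
  assumes M: "M \<in> carrier_mat n m" and N: "N \<in> carrier_mat m p"
  shows "map_mat Im (M * N) = map_mat Re M * map_mat Im N + map_mat Im M * map_mat Re N"
proof (rule eq_matI)
  fix i j assume i: "i < dim_row (map_mat Re M * map_mat Im N + map_mat Im M * map_mat Re N)"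
    and j: "j < dim_col (map_mat Re M * map_mat Im N + map_mat Im M * map_mat Re N)"
  have i': "i < n" and j': "j < p" using i j M N by auto
  show "map_mat Im (M * N) $$ (i, j) = (map_mat Re M * map_mat Im N + map_mat Im M * map_mat Re N) $$ (i, j)"
    using i' j' M N by (simp add: row_map_mat' Im_sprod)
qed (use M N in auto)

lemma Im_mult_mat2:
  assumes M: "M \<in> carrier_mat n m" and N: "N \<in> carrier_mat m p"
  shows "- map_mat Im (M * N) = map_mat Re M * (- map_mat Im N) + (- map_mat Im M) * map_mat Re N"
proof (rule eq_matI)
  fix i j assume i: "i < dim_row (map_mat Re M * (- map_mat Im N) + (- map_mat Im M) * map_mat Re N)"
    and j: "j < dim_col (map_mat Re M * (- map_mat Im N) + (- map_mat Im M) * map_mat Re N)"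
  have i': "i < n" and j': "j < p" using i j M N by auto
  show "(- map_mat Im (M * N)) $$ (i, j) = (map_mat Re M * (- map_mat Im N) + (- map_mat Im M) * map_mat Re N) $$ (i, j)"
    using i' j' M N by (simp add: row_map_mat' Im_sprod)
qed (use M N in auto)

lemma Rmat_mult:
  assumes M: "M \<in> carrier_mat n m" and N: "N \<in> carrier_mat m p"
  shows "Rmat (M * N) = Rmat M * Rmat N"
proof -
  have c1: "map_mat Re M \<in> carrier_mat n m" "- map_mat Im M \<in> carrier_mat n m"
     "map_mat Im M \<in> carrier_mat n m" using M by auto
  have c2: "map_mat Re N \<in> carrier_mat m p" "- map_mat Im N \<in> carrier_mat m p"
     "map_mat Im N \<in> carrier_mat m p" using N by auto
  show ?thesis
    unfolding Rmat_def mult_four_block_mat[OF c1(1) c1(2) c1(3) c1(1) c2(1) c2(2) c2(3) c2(1)]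
    using Re_mult_mat[OF M N] Im_mult_mat[OF M N] Re_mult_mat2[OF M N] Im_mult_mat2[OF M N]
    by (metis (no_types) comm_add_mat c1 c2 mult_carrier_mat)
qed

lemma Rmat_one: "Rmat (1\<^sub>m n) = 1\<^sub>m (n + n)"
proof -
  have "map_mat Re (1\<^sub>m n :: complex mat) = 1\<^sub>m n" by (intro eq_matI) auto
  moreover have "map_mat Im (1\<^sub>m n :: complex mat) = 0\<^sub>m n n" by (intro eq_matI) auto
  moreover have "- (0\<^sub>m n n :: real mat) = 0\<^sub>m n n" by (intro eq_matI) auto
  ultimately show ?thesis unfolding Rmat_def by simp
qed

lemma Rmat_adj:
  assumes M: "M \<in> carrier_mat n m"
  shows "Rmat (transpose_mat (map_mat cnj M)) = transpose_mat (Rmat M)"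
  using M by (intro eq_matI) (auto simp: Rmat_def)


lemma mult_vec_entry:
  assumes "X \<in> carrier_mat k m" "v \<in> carrier_vec m" "i < k"
  shows "(X *\<^sub>v v) $ i = (\<Sum>j = 0..<m. X $$ (i, j) * v $ j)"
  using assms unfolding mult_mat_vec_def scalar_prod_def by (auto intro!: sum.cong)

lemma term_top: "complex_of_real (Re z) * x + (- complex_of_real (Im z)) * (- \<i> * x) = z * x"
  by (simp add: complex_eq_iff algebra_simps)

lemma term_bot: "complex_of_real (Im z) * x + complex_of_real (Re z) * (- \<i> * x) = (- \<i>) * (z * x)"
  by (simp add: complex_eq_iff algebra_simps)

lemma Rmat_eigen:
  fixes M :: "complex mat"
  assumes M: "M \<in> carrier_mat k k" and v: "v \<in> carrier_vec k" "v \<noteq> 0\<^sub>v k"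
    and e: "M *\<^sub>v v = \<mu> \<cdot>\<^sub>v v"
  shows "eigenvalue (map_mat complex_of_real (Rmat M)) \<mu>"
proof -
  define A where "A = map_mat (\<lambda>x. complex_of_real (Re x)) M"
  define B where "B = map_mat (\<lambda>x. complex_of_real (Im x)) M"
  define w where "w = (- \<i>) \<cdot>\<^sub>v v"
  have A: "A \<in> carrier_mat k k" and B: "B \<in> carrier_mat k k" and mB: "- B \<in> carrier_mat k k"
    using M unfolding A_def B_def by auto
  have w: "w \<in> carrier_vec k" using v unfolding w_def by auto
  have map: "map_mat complex_of_real (Rmat M) = four_block_mat A (- B) B A"
    unfolding Rmat_def A_def B_def using M by (intro eq_matI) auto
  have top: "A *\<^sub>v v + (- B) *\<^sub>v w = \<mu> \<cdot>\<^sub>v v"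
  proof (rule eq_vecI)
    fix i assume i: "i < dim_vec (\<mu> \<cdot>\<^sub>v v)"
    then have ik: "i < k" using v by simp
    have "(A *\<^sub>v v + (- B) *\<^sub>v w) $ i = (A *\<^sub>v v) $ i + ((- B) *\<^sub>v w) $ i"
      using ik A mB v w by simp
    also have "\<dots> = (\<Sum>j = 0..<k. A $$ (i, j) * v $ j) + (\<Sum>j = 0..<k. (- B) $$ (i, j) * w $ j)"
      using mult_vec_entry[OF A v(1) ik] mult_vec_entry[OF mB w ik] by simp
    also have "\<dots> = (\<Sum>j = 0..<k. complex_of_real (Re (M $$ (i, j))) * v $ j
        + (- complex_of_real (Im (M $$ (i, j)))) * (- \<i> * v $ j))"
      unfolding sum.distrib[symmetric] using ik M v unfolding A_def B_def w_def
      by (intro sum.cong) auto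
    also have "\<dots> = (\<Sum>j = 0..<k. M $$ (i, j) * v $ j)" unfolding term_top ..
    also have "\<dots> = (M *\<^sub>v v) $ i" using mult_vec_entry[OF M v(1) ik] by simp
    finally show "(A *\<^sub>v v + (- B) *\<^sub>v w) $ i = (\<mu> \<cdot>\<^sub>v v) $ i" using e by simp
  qed (use v A B in auto)
  have bot: "B *\<^sub>v v + A *\<^sub>v w = \<mu> \<cdot>\<^sub>v w"
  proof (rule eq_vecI)
    fix i assume i: "i < dim_vec (\<mu> \<cdot>\<^sub>v w)"
    then have ik: "i < k" using w by simp
    have "(B *\<^sub>v v + A *\<^sub>v w) $ i = (B *\<^sub>v v) $ i + (A *\<^sub>v w) $ i"
      using ik A B v w by simp
    also have "\<dots> = (\<Sum>j = 0..<k. B $$ (i, j) * v $ j) + (\<Sum>j = 0..<k. A $$ (i, j) * w $ j)"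
      using mult_vec_entry[OF B v(1) ik] mult_vec_entry[OF A w ik] by simp
    also have "\<dots> = (\<Sum>j = 0..<k. complex_of_real (Im (M $$ (i, j))) * v $ j
        + complex_of_real (Re (M $$ (i, j))) * (- \<i> * v $ j))"
      unfolding sum.distrib[symmetric] using ik M v unfolding A_def B_def w_def
      by (intro sum.cong) auto
    also have "\<dots> = (- \<i>) * (\<Sum>j = 0..<k. M $$ (i, j) * v $ j)" unfolding term_bot sum_distrib_left ..
    also have "\<dots> = (- \<i>) * (M *\<^sub>v v) $ i" using mult_vec_entry[OF M v(1) ik] by simp
    also have "\<dots> = (\<mu> \<cdot>\<^sub>v w) $ i" using e ik v unfolding w_def by simp
    finally show "(B *\<^sub>v v + A *\<^sub>v w) $ i = (\<mu> \<cdot>\<^sub>v w) $ i" .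
  qed (use w A B in auto)
  have x: "v @\<^sub>v w \<in> carrier_vec (k + k)" using v w by auto
  have x0: "v @\<^sub>v w \<noteq> 0\<^sub>v (k + k)"
  proof
    assume z: "v @\<^sub>v w = 0\<^sub>v (k + k)"
    have "v = 0\<^sub>v k"
    proof (rule eq_vecI)
      fix i assume "i < dim_vec (0\<^sub>v k :: complex vec)"
      then have ik: "i < k" by simp
      have "(v @\<^sub>v w) $ i = v $ i" using ik v by simp
      then show "v $ i = 0\<^sub>v k $ i" using z ik by simp
    qed (use v in auto)
    then show False using v by simp
  qed
  have "map_mat complex_of_real (Rmat M) *\<^sub>v (v @\<^sub>v w) = \<mu> \<cdot>\<^sub>v (v @\<^sub>v w)"
  proof -
    have "map_mat complex_of_real (Rmat M) *\<^sub>v (v @\<^sub>v w) = (\<mu> \<cdot>\<^sub>v v) @\<^sub>v (\<mu> \<cdot>\<^sub>v w)"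
      unfolding map four_block_mat_mult_vec[OF A mB B A v(1) w] top bot ..
    also have "\<dots> = \<mu> \<cdot>\<^sub>v (v @\<^sub>v w)"
      using v w by (intro eq_vecI) (auto simp: index_append_vec)
    finally show ?thesis .
  qed
  moreover have "dim_row (map_mat complex_of_real (Rmat M)) = k + k"
    using Rmat_carrier[OF M] by simp
  ultimately show ?thesis unfolding eigenvalue_def eigenvector_def using x x0
    by (intro exI[of _ "v @\<^sub>v w"]) simp
qed


definition mtrace :: "'a :: comm_ring_1 mat \<Rightarrow> 'a" where
  "mtrace M = (\<Sum>i = 0..<dim_row M. M $$ (i, i))"

lemma mtrace_comm:
  fixes A B :: "'a :: comm_ring_1 mat"
  assumes A: "A \<in> carrier_mat n m" and B: "B \<in> carrier_mat m n"
  shows "mtrace (A * B) = mtrace (B * A)"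
proof -
  have "mtrace (A * B) = (\<Sum>i = 0..<n. \<Sum>l = 0..<m. A $$ (i, l) * B $$ (l, i))"
    unfolding mtrace_def using A B by (auto simp: scalar_prod_def intro!: sum.cong)
  also have "\<dots> = (\<Sum>l = 0..<m. \<Sum>i = 0..<n. B $$ (l, i) * A $$ (i, l))"
    by (subst sum.swap) (simp add: mult.commute)
  also have "\<dots> = mtrace (B * A)"
    unfolding mtrace_def using A B by (auto simp: scalar_prod_def intro!: sum.cong)
  finally show ?thesis .
qed

lemma mtrace_similar:
  fixes A B :: "'a :: comm_ring_1 mat"
  assumes "similar_mat A B"
  shows "mtrace A = mtrace B"
proof -
  from similar_matD[OF assms] obtain n P Q where
    c: "{A, B, P, Q} \<subseteq> carrier_mat n n" and QP: "Q * P = 1\<^sub>m n" and APBQ: "A = P * B * Q"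
    by blast
  have P: "P \<in> carrier_mat n n" and B: "B \<in> carrier_mat n n" and Q: "Q \<in> carrier_mat n n" using c by auto
  have "mtrace A = mtrace ((P * B) * Q)" using APBQ by simp
  also have "\<dots> = mtrace (Q * (P * B))" using mtrace_comm[OF mult_carrier_mat[OF P B] Q] .
  also have "Q * (P * B) = (Q * P) * B" using assoc_mult_mat[OF Q P B] by simp
  also have "\<dots> = B" using QP B by simp
  finally show ?thesis .
qed

lemma nonreal_eigenvalue_of_trace:
  fixes M :: "complex mat"
  assumes M: "M \<in> carrier_mat n n" and tr: "Im (mtrace M) \<noteq> 0"
  shows "\<exists>\<mu>. eigenvalue M \<mu> \<and> Im \<mu> \<noteq> 0"
proof (rule ccontr)
  assume no: "\<not> (\<exists>\<mu>. eigenvalue M \<mu> \<and> Im \<mu> \<noteq> 0)"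
  from char_poly_factorized[OF M] obtain as where cp: "char_poly M = (\<Prod>a\<leftarrow>as. [:- a, 1:])" by blast
  from schur_decomposition_exists[OF M cp] obtain B where B: "B \<in> carrier_mat n n"
    and ut: "upper_triangular B" and sim: "similar_mat M B" by blast
  have cpB: "char_poly M = (\<Prod>a\<leftarrow>diag_mat B. [:- a, 1:])"
    using char_poly_similar[OF sim] char_poly_upper_triangular[OF B ut] by simp
  have "Im (B $$ (i, i)) = 0" if i: "i < n" for i
  proof -
    have mem: "B $$ (i, i) \<in> set (diag_mat B)" using i B unfolding diag_mat_def by auto
    have "poly (char_poly M) (B $$ (i, i)) = 0"
      unfolding cpB poly_prod_list prod_list_zero_iff using mem by force
    then have "eigenvalue M (B $$ (i, i))" using eigenvalue_root_char_poly[OF M] by simp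
    then show ?thesis using no by blast
  qed
  then have "Im (mtrace B) = 0" unfolding mtrace_def using B by (simp add: Im_sum)
  then show False using tr mtrace_similar[OF sim] by simp
qed


definition sucm :: "nat \<Rightarrow> nat \<Rightarrow> nat" where "sucm k a = (a + 1) mod k"
definition predm :: "nat \<Rightarrow> nat \<Rightarrow> nat" where "predm k a = (a + (k - 1)) mod k"

lemma sucm_lt: "0 < k \<Longrightarrow> sucm k a < k" unfolding sucm_def by simp
lemma predm_lt: "0 < k \<Longrightarrow> predm k a < k" unfolding predm_def by simp

lemma sucm_predm_iff:
  assumes k: "0 < k" and a: "a < k" and c: "c < k"
  shows "(a = sucm k c) \<longleftrightarrow> (c = predm k a)"
proof -
  have "int a = (int c + 1) mod int k \<longleftrightarrow> int c = (int a + (int k - 1)) mod int k"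
  proof
    assume h: "int a = (int c + 1) mod int k"
    have "(int a + (int k - 1)) mod int k = ((int c + 1) + (int k - 1)) mod int k"
      unfolding h by (simp add: mod_add_left_eq)
    also have "\<dots> = (int c + int k) mod int k" by simp
    also have "\<dots> = int c" using c by simp
    finally show "int c = (int a + (int k - 1)) mod int k" by simp
  next
    assume h: "int c = (int a + (int k - 1)) mod int k"
    have "(int c + 1) mod int k = ((int a + (int k - 1)) + 1) mod int k"
      unfolding h by (simp add: mod_add_left_eq)
    also have "\<dots> = (int a + int k) mod int k" by simp
    also have "\<dots> = int a" using a by simp
    finally show "int a = (int c + 1) mod int k" by simp
  qed
  moreover have "int (sucm k c) = (int c + 1) mod int k" unfolding sucm_def by (simp add: zmod_int add.commute)
  moreover have "int (predm k a) = (int a + (int k - 1)) mod int k" unfolding predm_def using k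
    by (simp add: zmod_int of_nat_diff add_diff_eq)
  ultimately show ?thesis by (metis of_nat_eq_iff)
qed

fun rf :: "word \<Rightarrow> word \<Rightarrow> nat \<Rightarrow> nat \<Rightarrow> nat \<Rightarrow> real" where
  "rf w [] f a b = (if f = 0 \<and> a = b then 1 else 0)"
| "rf w (l # ls) f a b =
     (if w ! predm (length w) a = letter_transp l then rf w ls f (predm (length w) a) b else 0)
   + (if 0 < f \<and> w ! a = l then rf w ls (f - 1) (sucm (length w) a) b else 0)"

lemma rf_nonneg: "rf w ls f a b \<ge> 0"
  by (induction ls arbitrary: f a) auto

lemma rf_vanish: "length ls < f \<Longrightarrow> rf w ls f a b = 0"
  by (induction ls arbitrary: f a) auto

definition Cmat :: "word \<Rightarrow> complex \<Rightarrow> nat \<Rightarrow> complex mat" where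
  "Cmat w s i = mat (length w) (length w) (\<lambda>(a, b).
     (if w ! a = (i, False) \<and> b = sucm (length w) a then s else 0)
   + (if w ! b = (i, True) \<and> a = sucm (length w) b then cnj s else 0))"

definition cletter :: "word \<Rightarrow> complex \<Rightarrow> letter \<Rightarrow> complex mat" where
  "cletter w s l = (if snd l then transpose_mat (map_mat cnj (Cmat w s (fst l))) else Cmat w s (fst l))"

definition ceval :: "word \<Rightarrow> complex \<Rightarrow> word \<Rightarrow> complex mat" where
  "ceval w s ls = foldr (\<lambda>l M. cletter w s l * M) ls (1\<^sub>m (length w))"

lemma Cmat_carrier: "Cmat w s i \<in> carrier_mat (length w) (length w)"
  unfolding Cmat_def by simp

lemma cletter_carrier: "cletter w s l \<in> carrier_mat (length w) (length w)"
  unfolding cletter_def Cmat_def by simp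

lemma ceval_carrier: "ceval w s ls \<in> carrier_mat (length w) (length w)"
  unfolding ceval_def
  by (induction ls) (auto intro!: mult_carrier_mat[OF cletter_carrier])

lemma ceval_Cons: "ceval w s (l # ls) = cletter w s l * ceval w s ls"
  unfolding ceval_def by simp

lemma cletter_entry:
  assumes a: "a < length w" and b: "b < length w"
  shows "cletter w s l $$ (a, b) =
     (if w ! a = l \<and> b = sucm (length w) a then s else 0)
   + (if w ! b = letter_transp l \<and> a = sucm (length w) b then cnj s else 0)"
  using a b by (cases l) (auto simp: cletter_def Cmat_def letter_transp_def)


lemma mult_entry:
  assumes "A \<in> carrier_mat n m" "B \<in> carrier_mat m p" "i < n" "j < p"
  shows "(A * B) $$ (i, j) = (\<Sum>l = 0..<m. A $$ (i, l) * B $$ (l, j))"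
  using assms by (auto simp: scalar_prod_def intro!: sum.cong)

lemma cletter_sum:
  assumes k: "0 < length w" and a: "a < length w"
  shows "(\<Sum>c = 0..<length w. cletter w s l $$ (a, c) * X c) =
    (if w ! a = l then s * X (sucm (length w) a) else 0)
  + (if w ! predm (length w) a = letter_transp l then cnj s * X (predm (length w) a) else 0)"
proof -
  let ?k = "length w"
  have "(\<Sum>c = 0..<?k. cletter w s l $$ (a, c) * X c) =
     (\<Sum>c = 0..<?k. (if c = sucm ?k a then (if w ! a = l then s * X c else 0) else 0)
        + (if c = predm ?k a then (if w ! c = letter_transp l then cnj s * X c else 0) else 0))"
  proof (intro sum.cong refl)
    fix c assume "c \<in> {0..<?k}"
    then have c: "c < ?k" by simp
    show "cletter w s l $$ (a, c) * X c =
      (if c = sucm ?k a then (if w ! a = l then s * X c else 0) else 0)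
        + (if c = predm ?k a then (if w ! c = letter_transp l then cnj s * X c else 0) else 0)"
      unfolding cletter_entry[OF a c] sucm_predm_iff[OF k a c] by (auto simp: algebra_simps)
  qed
  also have "\<dots> = (if w ! a = l then s * X (sucm ?k a) else 0)
     + (if w ! predm ?k a = letter_transp l then cnj s * X (predm ?k a) else 0)"
    unfolding sum.distrib using sucm_lt[OF k] predm_lt[OF k] by (simp add: sum.delta)
  finally show ?thesis .
qed

lemma shift_sum_A:
  fixes g :: "nat \<Rightarrow> real" and s :: complex
  assumes "g (Suc m) = 0"
  shows "(\<Sum>f\<le>Suc m. s ^ f * cnj s ^ (Suc m - f) * of_real (g f))
     = cnj s * (\<Sum>f\<le>m. s ^ f * cnj s ^ (m - f) * of_real (g f))"
proof -
  have "(\<Sum>f\<le>Suc m. s ^ f * cnj s ^ (Suc m - f) * of_real (g f))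
      = (\<Sum>f\<le>m. s ^ f * cnj s ^ (Suc m - f) * of_real (g f))"
    using assms by simp
  also have "\<dots> = (\<Sum>f\<le>m. cnj s * (s ^ f * cnj s ^ (m - f) * of_real (g f)))"
    by (intro sum.cong refl) (simp add: Suc_diff_le algebra_simps)
  finally show ?thesis by (simp add: sum_distrib_left)
qed

lemma shift_sum_B:
  fixes h :: "nat \<Rightarrow> real" and s :: complex
  shows "(\<Sum>f\<le>Suc m. s ^ f * cnj s ^ (Suc m - f) * of_real (if 0 < f then h (f - 1) else 0))
     = s * (\<Sum>f\<le>m. s ^ f * cnj s ^ (m - f) * of_real (h f))"
  by (simp add: sum.atMost_Suc_shift sum_distrib_left algebra_simps del: sum.atMost_Suc)

lemma shift_sum_B':
  fixes h :: "nat \<Rightarrow> real" and s :: complex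
  shows "(\<Sum>f\<le>Suc m. s ^ f * cnj s ^ (Suc m - f) * of_real (if 0 < f \<and> Q then h (f - 1) else 0))
     = (if Q then s * (\<Sum>f\<le>m. s ^ f * cnj s ^ (m - f) * of_real (h f)) else 0)"
  by (cases Q) (simp_all add: sum.atMost_Suc_shift sum_distrib_left algebra_simps del: sum.atMost_Suc)

lemma ceval_entry:
  assumes k: "0 < length w" and a: "a < length w" and b: "b < length w"
  shows "ceval w s ls $$ (a, b) = (\<Sum>f\<le>length ls. s ^ f * cnj s ^ (length ls - f) * of_real (rf w ls f a b))"
  using a
proof (induction ls arbitrary: a)
  case Nil
  then show ?case using b by (simp add: ceval_def)
next
  case (Cons l ls)
  let ?k = "length w"
  let ?m = "length ls"
  let ?E = "\<lambda>c. (\<Sum>f\<le>?m. s ^ f * cnj s ^ (?m - f) * of_real (rf w ls f c b))"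
  have "ceval w s (l # ls) $$ (a, b) = (\<Sum>c = 0..<?k. cletter w s l $$ (a, c) * ceval w s ls $$ (c, b))"
    unfolding ceval_Cons using mult_entry[OF cletter_carrier ceval_carrier Cons.prems b] .
  also have "\<dots> = (\<Sum>c = 0..<?k. cletter w s l $$ (a, c) * ?E c)"
    by (intro sum.cong refl) (simp add: Cons.IH)
  also have "\<dots> = (if w ! a = l then s * ?E (sucm ?k a) else 0)
     + (if w ! predm ?k a = letter_transp l then cnj s * ?E (predm ?k a) else 0)"
    using cletter_sum[OF k Cons.prems] .
  also have "\<dots> = (\<Sum>f\<le>Suc ?m. s ^ f * cnj s ^ (Suc ?m - f) *
       of_real ((if w ! predm ?k a = letter_transp l then rf w ls f (predm ?k a) b else 0)
          + (if 0 < f \<and> w ! a = l then rf w ls (f - 1) (sucm ?k a) b else 0)))"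
  proof -
    have A: "(\<Sum>f\<le>Suc ?m. s ^ f * cnj s ^ (Suc ?m - f) * of_real (if w ! predm ?k a = letter_transp l then rf w ls f (predm ?k a) b else 0))
      = (if w ! predm ?k a = letter_transp l then cnj s * ?E (predm ?k a) else 0)"
      using shift_sum_A[of "\<lambda>f. if w ! predm ?k a = letter_transp l then rf w ls f (predm ?k a) b else 0" ?m s]
      by (simp add: rf_vanish)
    have B: "(\<Sum>f\<le>Suc ?m. s ^ f * cnj s ^ (Suc ?m - f) * of_real (if 0 < f \<and> w ! a = l then rf w ls (f - 1) (sucm ?k a) b else 0))
      = (if w ! a = l then s * ?E (sucm ?k a) else 0)"
      by (rule shift_sum_B')
    show ?thesis unfolding of_real_add distrib_left sum.distrib A B by (simp add: add.commute)
  qed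
  also have "\<dots> = (\<Sum>f\<le>length (l # ls). s ^ f * cnj s ^ (length (l # ls) - f) * of_real (rf w (l # ls) f a b))"
    by simp
  finally show ?case .
qed


lemma rf_support:
  assumes "rf w ls f a b \<noteq> 0" "a < length w" "0 < length w"
  shows "f \<le> length ls \<and> b = (a + f + (length ls - f) * (length w - 1)) mod length w"
  using assms
proof (induction ls arbitrary: f a)
  case Nil
  then show ?case by (auto split: if_splits)
next
  case (Cons l ls)
  let ?k = "length w"
  let ?m = "length ls"
  from Cons.prems(1) have
    "(w ! predm ?k a = letter_transp l \<and> rf w ls f (predm ?k a) b \<noteq> 0) \<or>
     (0 < f \<and> w ! a = l \<and> rf w ls (f - 1) (sucm ?k a) b \<noteq> 0)"
    by (auto split: if_splits)
  then show ?case
  proof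
    assume h: "w ! predm ?k a = letter_transp l \<and> rf w ls f (predm ?k a) b \<noteq> 0"
    have IH: "f \<le> ?m \<and> b = (predm ?k a + f + (?m - f) * (?k - 1)) mod ?k"
      using Cons.IH[of f "predm ?k a"] h predm_lt[OF Cons.prems(3)] Cons.prems(3) by blast
    have f: "f \<le> ?m" and bb: "b = (predm ?k a + f + (?m - f) * (?k - 1)) mod ?k"
      using IH by blast+
    have "b = (a + (?k - 1) + f + (?m - f) * (?k - 1)) mod ?k"
      unfolding bb predm_def by (simp only: add.assoc mod_add_left_eq)
    also have "a + (?k - 1) + f + (?m - f) * (?k - 1) = a + f + (Suc ?m - f) * (?k - 1)"
    proof -
      have gen: "\<And>x d y::nat. y + d + f + x * d = y + f + Suc x * d" by simp
      have "Suc ?m - f = Suc (?m - f)" using f by (rule Suc_diff_le)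
      then show ?thesis using gen[of a "?k - 1" "?m - f"] by simp
    qed
    finally have "b = (a + f + (Suc ?m - f) * (?k - 1)) mod ?k" .
    moreover have "f \<le> Suc ?m" using f by simp
    ultimately show ?thesis by simp
  next
    assume h: "0 < f \<and> w ! a = l \<and> rf w ls (f - 1) (sucm ?k a) b \<noteq> 0"
    have IH: "f - 1 \<le> ?m \<and> b = (sucm ?k a + (f - 1) + (?m - (f - 1)) * (?k - 1)) mod ?k"
      using Cons.IH[of "f - 1" "sucm ?k a"] h sucm_lt[OF Cons.prems(3)] Cons.prems(3) by blast
    have f: "f - 1 \<le> ?m" and bb: "b = (sucm ?k a + (f - 1) + (?m - (f - 1)) * (?k - 1)) mod ?k"
      using IH by blast+
    have "b = (a + 1 + (f - 1) + (?m - (f - 1)) * (?k - 1)) mod ?k"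
      unfolding bb sucm_def by (simp only: add.assoc mod_add_left_eq)
    also have "a + 1 + (f - 1) + (?m - (f - 1)) * (?k - 1) = a + f + (Suc ?m - f) * (?k - 1)"
    proof -
      have e1: "?m - (f - 1) = Suc ?m - f" using h f by linarith
      have e2: "a + 1 + (f - 1) = a + f" using h by linarith
      show ?thesis unfolding e1 e2 ..
    qed
    finally have "b = (a + f + (Suc ?m - f) * (?k - 1)) mod ?k" .
    moreover have "f \<le> Suc ?m" using f h by linarith
    ultimately show ?thesis by simp
  qed
qed

lemma rf_diag_support:
  assumes nz: "rf w w f a a \<noteq> 0" and a: "a < length w" and k: "0 < length w"
  shows "f = 0 \<or> 2 * f = length w \<or> f = length w"
proof -
  let ?k = "length w"
  from rf_support[OF nz a k] have f: "f \<le> ?k" and e: "a = (a + f + (?k - f) * (?k - 1)) mod ?k" by auto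
  define X where "X = f + (?k - f) * (?k - 1)"
  have "(a + X) mod ?k = a mod ?k" using e a unfolding X_def by (simp add: add.assoc)
  then have dX: "?k dvd X" using mod_eq_dvd_iff_nat[of a "a + X" ?k] by simp
  have XK: "X + ?k = 2 * f + (?k - f) * ?k"
  proof -
    have gen: "\<And>x d::nat. x * d + x = x * Suc d" by simp
    have "Suc (?k - 1) = ?k" using k by simp
    then have "(?k - f) * (?k - 1) + (?k - f) = (?k - f) * ?k" using gen[of "?k - f" "?k - 1"] by simp
    then show ?thesis unfolding X_def using f by linarith
  qed
  have "?k dvd X + ?k" using dX by simp
  then have "?k dvd 2 * f + (?k - f) * ?k" unfolding XK .
  then have "?k dvd 2 * f" using dvd_add_times_triv_right_iff by blast
  then obtain q where q: "2 * f = ?k * q" by (elim dvdE)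
  have "?k * q \<le> ?k * 2" using q f by linarith
  then have q2: "q \<le> 2" using k by simp
  consider "q = 0" | "q = 1" | "q = 2" using q2 by linarith
  then show ?thesis
  proof cases
    case 1 then show ?thesis using q by simp
  next
    case 2 then show ?thesis using q by simp
  next
    case 3 then show ?thesis using q by simp
  qed
qed

lemma rf_forward:
  assumes k: "0 < length w"
  shows "j \<le> length w \<Longrightarrow> rf w (drop j w) (length w - j) (j mod length w) 0 = 1"
proof (induction "length w - j" arbitrary: j)
  case 0
  then have "j = length w" by simp
  then show ?case by simp
next
  case (Suc d)
  let ?k = "length w"
  have j: "j < ?k" using Suc by simp
  have dj: "drop j w = w ! j # drop (Suc j) w" using j by (simp add: Cons_nth_drop_Suc)
  have IH: "rf w (drop (Suc j) w) (?k - Suc j) (Suc j mod ?k) 0 = 1"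
    using Suc.hyps(1)[of "Suc j"] Suc.hyps(2) j by simp
  have van: "rf w (drop (Suc j) w) (?k - j) (predm ?k j) 0 = 0"
    by (rule rf_vanish) (use j in simp)
  have "rf w (drop j w) (?k - j) j 0 = rf w (drop (Suc j) w) (?k - Suc j) (sucm ?k j) 0"
    unfolding dj using van j by simp
  also have "\<dots> = 1" using IH unfolding sucm_def by simp
  finally show ?case using j by simp
qed

lemma rf_backward:
  assumes k: "0 < length w"
  shows "rf w ls 0 a b \<noteq> 0 \<Longrightarrow> a < length w \<Longrightarrow>
    (\<forall>j < length ls. w ! ((a + (j + 1) * (length w - 1)) mod length w) = letter_transp (ls ! j))"
proof (induction ls arbitrary: a)
  case Nil
  then show ?case by simp
next
  case (Cons l ls)
  let ?k = "length w"
  from Cons.prems(1) have h: "w ! predm ?k a = letter_transp l" and nz: "rf w ls 0 (predm ?k a) b \<noteq> 0"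
    by (auto split: if_splits)
  have IH: "\<forall>j < length ls. w ! ((predm ?k a + (j + 1) * (?k - 1)) mod ?k) = letter_transp (ls ! j)"
    using Cons.IH[OF nz predm_lt[OF k]] .
  show ?case
  proof (intro allI impI)
    fix j assume j: "j < length (l # ls)"
    show "w ! ((a + (j + 1) * (?k - 1)) mod ?k) = letter_transp ((l # ls) ! j)"
    proof (cases j)
      case 0
      then show ?thesis using h unfolding predm_def by simp
    next
      case (Suc i)
      have "(predm ?k a + (i + 1) * (?k - 1)) mod ?k = (a + (?k - 1) + (i + 1) * (?k - 1)) mod ?k"
        unfolding predm_def by (simp only: mod_add_left_eq)
      also have "a + (?k - 1) + (i + 1) * (?k - 1) = a + (j + 1) * (?k - 1)"
      proof -
        have gen: "\<And>d::nat. (Suc i + 1) * d = d + (i + 1) * d" by simp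
        show ?thesis using gen[of "?k - 1"] Suc by simp
      qed
      finally have "(predm ?k a + (i + 1) * (?k - 1)) mod ?k = (a + (j + 1) * (?k - 1)) mod ?k" .
      then show ?thesis using IH j Suc by (metis Suc_less_eq length_Cons nth_Cons_Suc)
    qed
  qed
qed


definition tau :: "word \<Rightarrow> nat \<Rightarrow> real" where
  "tau w f = (\<Sum>a = 0..<length w. rf w w f a a)"

lemma trace_ceval:
  assumes k: "0 < length w"
  shows "mtrace (ceval w s w) = (\<Sum>f\<le>length w. s ^ f * cnj s ^ (length w - f) * of_real (tau w f))"
proof -
  let ?k = "length w"
  have "mtrace (ceval w s w) = (\<Sum>a = 0..<?k. ceval w s w $$ (a, a))"
    unfolding mtrace_def using ceval_carrier[of w s w] by simp
  also have "\<dots> = (\<Sum>a = 0..<?k. \<Sum>f\<le>?k. s ^ f * cnj s ^ (?k - f) * of_real (rf w w f a a))"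
    by (intro sum.cong refl) (simp add: ceval_entry[OF k])
  also have "\<dots> = (\<Sum>f\<le>?k. \<Sum>a = 0..<?k. s ^ f * cnj s ^ (?k - f) * of_real (rf w w f a a))"
    by (rule sum.swap)
  also have "\<dots> = (\<Sum>f\<le>?k. s ^ f * cnj s ^ (?k - f) * of_real (tau w f))"
    unfolding tau_def by (simp add: sum_distrib_left)
  finally show ?thesis .
qed

lemma tau_nonzero:
  assumes "tau w f \<noteq> 0"
  shows "\<exists>a < length w. rf w w f a a \<noteq> 0"
proof (rule ccontr)
  assume "\<not> (\<exists>a < length w. rf w w f a a \<noteq> 0)"
  then have "tau w f = 0" unfolding tau_def by (intro sum.neutral) auto
  then show False using assms by simp
qed

lemma cis_pow_term:
  assumes f: "f \<le> k"
  shows "cis t ^ f * cnj (cis t) ^ (k - f) = cis ((real f - real (k - f)) * t)"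
  by (simp add: DeMoivre cis_cnj cis_mult algebra_simps)

lemma Im_term:
  assumes k: "0 < length w" and f: "f \<le> length w"
  shows "Im (cis (pi / (2 * real (length w))) ^ f * cnj (cis (pi / (2 * real (length w)))) ^ (length w - f))
      * tau w f = (if f = length w then tau w f else if f = 0 then - tau w f else 0)"
proof (cases "tau w f = 0")
  case True
  show ?thesis unfolding True by simp
next
  case False
  let ?k = "length w"
  let ?t = "pi / (2 * real ?k)"
  from tau_nonzero[OF False] obtain a where a: "a < ?k" "rf w w f a a \<noteq> 0" by blast
  have cs: "f = 0 \<or> 2 * f = ?k \<or> f = ?k" using rf_diag_support[OF a(2) a(1) k] .
  have im: "Im (cis ?t ^ f * cnj (cis ?t) ^ (?k - f)) = sin ((real f - real (?k - f)) * ?t)"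
    using cis_pow_term[OF f] by simp
  have kr: "real ?k > 0" using k by simp
  show ?thesis
  proof (cases "f = ?k")
    case True
    have "(real f - real (?k - f)) * ?t = pi / 2" using True kr by (simp add: field_simps)
    then show ?thesis using im True k by simp
  next
    case fk: False
    show ?thesis
    proof (cases "f = 0")
      case True
      have "(real f - real (?k - f)) * ?t = - (pi / 2)" using True kr by (simp add: field_simps)
      then show ?thesis using im True fk k by simp
    next
      case False
      then have "2 * f = ?k" using cs fk by simp
      then have "real f - real (?k - f) = 0" by simp
      then show ?thesis using im False fk by simp
    qed
  qed
qed

lemma Im_trace:
  assumes k: "0 < length w"
  shows "Im (mtrace (ceval w (cis (pi / (2 * real (length w)))) w)) = tau w (length w) - tau w 0"
proof -
  let ?k = "length w"
  let ?s = "cis (pi / (2 * real ?k))"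
  have "Im (mtrace (ceval w ?s w)) = (\<Sum>f\<le>?k. Im (?s ^ f * cnj ?s ^ (?k - f)) * tau w f)"
    unfolding trace_ceval[OF k] by (simp add: Im_sum)
  also have "\<dots> = (\<Sum>f\<le>?k. (if f = ?k then tau w f else if f = 0 then - tau w f else 0))"
    by (intro sum.cong refl, rule Im_term[OF k], simp)
  also have "\<dots> = (\<Sum>f\<le>?k. (if f = ?k then tau w f else 0)) + (\<Sum>f\<le>?k. (if f = 0 then - tau w f else 0))"
    unfolding sum.distrib[symmetric] using k by (intro sum.cong refl) auto
  also have "\<dots> = tau w ?k - tau w 0" by (simp add: sum.delta)
  finally show ?thesis .
qed


lemma eval_word_Rmat:
  "eval_word (length w + length w) (\<lambda>i. Rmat (Cmat w s i)) ls = Rmat (ceval w s ls)"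
proof (induction ls)
  case Nil
  then show ?case by (simp add: eval_word_Nil ceval_def Rmat_one)
next
  case (Cons l ls)
  have el: "eval_letter (\<lambda>i. Rmat (Cmat w s i)) l = Rmat (cletter w s l)"
    unfolding eval_letter_def cletter_def using Rmat_adj[OF Cmat_carrier[of w s "fst l"]] by simp
  show ?case unfolding eval_word_Cons ceval_Cons Cons el
    using Rmat_mult[OF cletter_carrier ceval_carrier] by simp
qed

lemma predm_pow_int:
  assumes k: "0 < k" and a: "a < k"
  shows "(a + (j + 1) * (k - 1)) mod k = nat ((int a - 1 - int j) mod int k)"
proof -
  have e: "int (a + (j + 1) * (k - 1)) = int a + (int j + 1) * (int k - 1)"
  proof -
    obtain k' where kk: "k = Suc k'" using k by (cases k) auto
    show ?thesis unfolding kk by (simp add: algebra_simps)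
  qed
  have "int ((a + (j + 1) * (k - 1)) mod k) = (int a + (int j + 1) * (int k - 1)) mod int k"
    unfolding of_nat_mod e ..
  also have "\<dots> = (int a - 1 - int j) mod int k"
  proof -
    have eq: "int a + (int j + 1) * (int k - 1) = (int a - 1 - int j) + int k * (int j + 1)"
      by (simp add: algebra_simps)
    show ?thesis unfolding eq by (rule mod_mult_self2)
  qed
  finally show ?thesis by (metis nat_int)
qed

lemma psd_imp_symmetric:
  assumes ne: "P \<noteq> []" and psd: "psd_word P"
  shows "symmetric_word P"
proof (rule ccontr)
  assume nsym: "\<not> symmetric_word P"
  let ?k = "length P"
  have k: "0 < ?k" using ne by simp
  define s where "s = cis (pi / (2 * real ?k))"
  define M where "M = ceval P s P"
  have M: "M \<in> carrier_mat ?k ?k" unfolding M_def by (rule ceval_carrier)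
  have t0: "tau P 0 = 0"
  proof (rule ccontr)
    assume "tau P 0 \<noteq> 0"
    from tau_nonzero[OF this] obtain a where a: "a < ?k" "rf P P 0 a a \<noteq> 0" by blast
    have bw: "\<forall>j < ?k. P ! ((a + (j + 1) * (?k - 1)) mod ?k) = letter_transp (P ! j)"
      using rf_backward[OF k a(2) a(1)] .
    have "symmetric_word P"
    proof (rule reflect_imp_symmetric[OF k a(1)])
      fix j assume j: "j < ?k"
      have bwj: "P ! ((a + (j + 1) * (?k - 1)) mod ?k) = letter_transp (P ! j)" using bw j by blast
      have "P ! nat ((int a - 1 - int j) mod int ?k) = letter_transp (P ! j)"
        using bwj unfolding predm_pow_int[OF k a(1), of j] .
      then show "P ! j = letter_transp (P ! nat ((int a - 1 - int j) mod int ?k))" by simp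
    qed
    then show False using nsym by simp
  qed
  have tk: "tau P ?k \<ge> 1"
  proof -
    have "rf P P ?k 0 0 = 1" using rf_forward[OF k, of 0] by simp
    moreover have "rf P P ?k 0 0 \<le> tau P ?k"
      unfolding tau_def using k rf_nonneg by (intro member_le_sum) auto
    ultimately show ?thesis by simp
  qed
  have "Im (mtrace M) \<noteq> 0" unfolding M_def s_def Im_trace[OF k] using t0 tk by simp
  from nonreal_eigenvalue_of_trace[OF M this] obtain \<mu> where
    ev: "eigenvalue M \<mu>" and im: "Im \<mu> \<noteq> 0" by blast
  from ev obtain v where v: "v \<in> carrier_vec ?k" "v \<noteq> 0\<^sub>v ?k" and e: "M *\<^sub>v v = \<mu> \<cdot>\<^sub>v v"
    unfolding eigenvalue_def eigenvector_def using M by auto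
  have "eigenvalue (map_mat complex_of_real (Rmat M)) \<mu>" by (rule Rmat_eigen[OF M v e])
  then have ev2: "eigenvalue (map_mat complex_of_real (eval_word (?k + ?k) (\<lambda>i. Rmat (Cmat P s i)) P)) \<mu>"
    unfolding eval_word_Rmat M_def .
  have car: "\<And>i. Rmat (Cmat P s i) \<in> carrier_mat (?k + ?k) (?k + ?k)"
    by (intro Rmat_carrier Cmat_carrier)
  have "\<mu> \<in> \<real> \<and> 0 \<le> Re \<mu>"
    by (rule psd[unfolded psd_word_def, rule_format, where n="length P + length P"
          and A="\<lambda>i. Rmat (Cmat P s i)" and c=\<mu>, OF car ev2])
  then have "\<mu> \<in> \<real>" ..
  then show False using im by (simp add: complex_is_Real_iff)
qed

theorem mainTheorem2:
  fixes P :: word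
  assumes "P \<noteq> []"
  shows "psd_word P \<longleftrightarrow> symmetric_word P"
  using psd_imp_symmetric[OF assms] symmetric_imp_psd by blast

end
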